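(* (Energy preservation of the KZ power spectral density.) Let $\omega_0>0$, $z\ge 0$, $\epsilon>0$, and let $(S^0_k)_{k\in\mathbb{Z}}$ be a finitely supported sequence of real numbers. Define for $k\in\mathbb{Z}$ $$S^{\mathrm{KZ}}_k(z):=S^0_k+8\epsilon^2\sum_{(l,m,n)\in\mathrm{nr}_k}|H_{lmnk}(z)|^2\,T_{lmnk},$$ with $T_{lmnk}:=S^0_lS^0_mS^0_n+S^0_lS^0_mS^0_k-S^0_lS^0_nS^0_k-S^0_mS^0_nS^0_k$. Then $$\sum_{k\in\mathbb{Z}}S^{\mathrm{KZ}}_k(z)=\sum_{k\in\mathbb{Z}}S^0_k,$$ equivalently $\sum_{k}\sum_{(l,m,n)\in\mathrm{nr}_k}|H_{lmnk}(z)|^2T_{lmnk}=0$.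
   Context: $\mathrm{nr}_k:=\{(l,m,n)\in\mathbb{Z}^3:\ l+m=n+k,\ l\neq k,\ m\neq k\}$. $\Omega_{lmnk}:=\omega_0^2(l^2+m^2-n^2-k^2)$. The $H$-function is $H_{lmnk}(z):=(1-e^{j\Omega_{lmnk}z})/\Omega_{lmnk}$ if $\Omega_{lmnk}\neq0$ and $H_{lmnk}(z):=-jz$ if $\Omega_{lmnk}=0$ (here $j=\sqrt{-1}$). $T_{lmnk}$ is called the collision term. *)

theory Defs
  imports "HOL-Analysis.Analysis"
begin

definition nr :: "int \<Rightarrow> (int \<times> int \<times> int) set" where
  "nr k = {(l, m, n). l + m = n + k \<and> l \<noteq> k \<and> m \<noteq> k}"

definition Omega :: "real \<Rightarrow> int \<Rightarrow> int \<Rightarrow> int \<Rightarrow> int \<Rightarrow> real" where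
  "Omega \<omega>0 l m n k = \<omega>0\<^sup>2 * real_of_int (l\<^sup>2 + m\<^sup>2 - n\<^sup>2 - k\<^sup>2)"

definition Hfun :: "real \<Rightarrow> int \<Rightarrow> int \<Rightarrow> int \<Rightarrow> int \<Rightarrow> real \<Rightarrow> complex" where
  "Hfun \<omega>0 l m n k z =
     (let \<Omega> = Omega \<omega>0 l m n k in
      if \<Omega> \<noteq> 0 then (1 - exp (\<i> * complex_of_real (\<Omega> * z))) / complex_of_real \<Omega>
      else - \<i> * complex_of_real z)"

definition Tcoll :: "(int \<Rightarrow> real) \<Rightarrow> int \<Rightarrow> int \<Rightarrow> int \<Rightarrow> int \<Rightarrow> real" where
  "Tcoll S l m n k = S l * S m * S n + S l * S m * S k - S l * S n * S k - S m * S n * S k"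

definition SKZ :: "real \<Rightarrow> real \<Rightarrow> (int \<Rightarrow> real) \<Rightarrow> real \<Rightarrow> int \<Rightarrow> real" where
  "SKZ \<omega>0 \<epsilon> S z k = S k + 8 * \<epsilon>\<^sup>2 *
     (\<Sum>\<^sub>\<infinity>(l, m, n)\<in>nr k. (cmod (Hfun \<omega>0 l m n k z))\<^sup>2 * Tcoll S l m n k)"

end

theory Submission
  imports Defs
begin

lemma cmod_sym_aux: "cmod (1 - exp (\<i> * complex_of_real (-x))) = cmod (1 - exp (\<i> * complex_of_real x))"
proof -
  have "1 - exp (\<i> * complex_of_real (-x)) = cnj (1 - exp (\<i> * complex_of_real x))"
    by (simp add: exp_cnj)
  then show ?thesis by (metis complex_mod_cnj)
qed

lemma H_sym: "cmod (Hfun w n k l m z) = cmod (Hfun w l m n k z)"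
proof -
  have O: "Omega w n k l m = - Omega w l m n k" by (simp add: Omega_def algebra_simps)
  define o1 where "o1 = Omega w l m n k"
  have e: "- o1 * z = - (o1 * z)" by simp
  show ?thesis
    unfolding Hfun_def Let_def O o1_def[symmetric]
    using cmod_sym_aux[of "o1 * z"]
    by (auto simp: e norm_divide)
qed

lemma T_anti: "Tcoll S n k l m = - Tcoll S l m n k"
  by (simp add: Tcoll_def algebra_simps)

lemma T_nz: "Tcoll S l m n k \<noteq> 0 \<Longrightarrow>
   (S l \<noteq> 0 \<and> S m \<noteq> 0 \<and> S n \<noteq> 0) \<or> (S l \<noteq> 0 \<and> S m \<noteq> 0 \<and> S k \<noteq> 0) \<or>
   (S l \<noteq> 0 \<and> S n \<noteq> 0 \<and> S k \<noteq> 0) \<or> (S m \<noteq> 0 \<and> S n \<noteq> 0 \<and> S k \<noteq> 0)"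
  unfolding Tcoll_def by auto

theorem mainTheorem5:
  fixes \<omega>0 \<epsilon> z :: real and S :: "int \<Rightarrow> real"
  assumes "\<omega>0 > 0" and "z \<ge> 0" and "\<epsilon> > 0"
    and "finite {k. S k \<noteq> 0}"
  shows "(\<Sum>\<^sub>\<infinity>k\<in>UNIV. SKZ \<omega>0 \<epsilon> S z k) = (\<Sum>\<^sub>\<infinity>k\<in>UNIV. S k)"
proof -
  define F where "F = {k. S k \<noteq> 0}"
  define G where "G = (\<lambda>(a,b,c). a + b - c) ` (F \<times> F \<times> F)"
  have finG: "finite G" unfolding G_def F_def using assms(4) by auto
  have FG: "F \<subseteq> G"
  proof
    fix a assume "a \<in> F"
    then have "(a,a,a) \<in> F \<times> F \<times> F" by auto
    then show "a \<in> G" unfolding G_def by force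
  qed
  define g where "g l m n k = (cmod (Hfun \<omega>0 l m n k z))\<^sup>2 * Tcoll S l m n k" for l m n k
  have gz: "l \<in> G \<and> m \<in> G \<and> n \<in> G \<and> k \<in> G"
    if "g l m n k \<noteq> 0" "l + m = n + k" for l m n k
  proof -
    have "Tcoll S l m n k \<noteq> 0" using that(1) unfolding g_def by auto
    from T_nz[OF this] have
      "(l \<in> F \<and> m \<in> F \<and> n \<in> F) \<or> (l \<in> F \<and> m \<in> F \<and> k \<in> F) \<or>
       (l \<in> F \<and> n \<in> F \<and> k \<in> F) \<or> (m \<in> F \<and> n \<in> F \<and> k \<in> F)"
      unfolding F_def by auto
    moreover have A: "x + y - w \<in> G" if "x \<in> F" "y \<in> F" "w \<in> F" for x y w
      using that unfolding G_def by force
    moreover have "l = n + k - m" "m = n + k - l" "n = l + m - k" "k = l + m - n"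
      using that(2) by auto
    ultimately show ?thesis using FG
    proof (elim disjE conjE)
      assume h: "l \<in> F" "m \<in> F" "n \<in> F"
      have "k \<in> G" using A[OF h] \<open>k = l + m - n\<close> by simp
      then show ?thesis using h FG by auto
    next
      assume h: "l \<in> F" "m \<in> F" "k \<in> F"
      have "n \<in> G" using A[OF h] \<open>n = l + m - k\<close> by simp
      then show ?thesis using h FG by auto
    next
      assume h: "l \<in> F" "n \<in> F" "k \<in> F"
      have "m \<in> G" using A[OF h(2,3,1)] \<open>m = n + k - l\<close> by simp
      then show ?thesis using h FG by auto
    next
      assume h: "m \<in> F" "n \<in> F" "k \<in> F"
      have "l \<in> G" using A[OF h(2,3,1)] \<open>l = n + k - m\<close> by simp
      then show ?thesis using h FG by auto
    qed
  qed
  define P where "P k = {(l,m,n). (l,m,n) \<in> nr k \<and> l \<in> G \<and> m \<in> G \<and> n \<in> G}" for k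
  have finP: "finite (P k)" for k
    by (rule finite_subset[of _ "G \<times> G \<times> G"]) (auto simp: P_def finG)
  define I where "I k = (\<Sum>(l,m,n)\<in>P k. g l m n k)" for k
  have SKZ_eq: "SKZ \<omega>0 \<epsilon> S z k = S k + 8 * \<epsilon>\<^sup>2 * I k" for k
  proof -
    have "(\<Sum>\<^sub>\<infinity>(l, m, n)\<in>nr k. (cmod (Hfun \<omega>0 l m n k z))\<^sup>2 * Tcoll S l m n k)
        = (\<Sum>\<^sub>\<infinity>(l, m, n)\<in>P k. g l m n k)"
    proof (rule infsum_cong_neutral)
      fix x assume "x \<in> nr k - P k"
      then show "(case x of (l, m, n) \<Rightarrow> (cmod (Hfun \<omega>0 l m n k z))\<^sup>2 * Tcoll S l m n k) = 0"
        using gz unfolding P_def nr_def g_def by (cases x) fastforce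
    qed (auto simp: P_def g_def)
    then show ?thesis unfolding SKZ_def I_def using finP by simp
  qed
  have Iz: "I k = 0" if "k \<notin> G" for k
    unfolding I_def
  proof (rule sum.neutral, clarify)
    fix l m n assume "(l,m,n) \<in> P k"
    then show "g l m n k = 0" using gz[of l m n k] that by (auto simp: P_def nr_def)
  qed
  have L: "(\<Sum>\<^sub>\<infinity>k\<in>UNIV. SKZ \<omega>0 \<epsilon> S z k) = (\<Sum>k\<in>G. S k + 8 * \<epsilon>\<^sup>2 * I k)"
  proof -
    have "(\<Sum>\<^sub>\<infinity>k\<in>UNIV. SKZ \<omega>0 \<epsilon> S z k) = (\<Sum>\<^sub>\<infinity>k\<in>G. S k + 8 * \<epsilon>\<^sup>2 * I k)"
      by (rule infsum_cong_neutral) (use Iz FG in \<open>auto simp: SKZ_eq F_def\<close>)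
    then show ?thesis using finG by simp
  qed
  have R: "(\<Sum>\<^sub>\<infinity>k\<in>UNIV. S k) = (\<Sum>k\<in>G. S k)"
  proof -
    have "(\<Sum>\<^sub>\<infinity>k\<in>UNIV. S k) = (\<Sum>\<^sub>\<infinity>k\<in>G. S k)"
      by (rule infsum_cong_neutral) (use FG in \<open>auto simp: F_def\<close>)
    then show ?thesis using finG by simp
  qed
  define h where "h = (\<lambda>(k,(l,m,n)). g l m n k)"
  define \<sigma> where "\<sigma> = (\<lambda>(k::int,(l::int,m::int,n::int)). (m,(n,k,l)))"
  have sumI: "(\<Sum>k\<in>G. I k) = sum h (Sigma G P)"
    unfolding I_def h_def by (subst sum.Sigma) (auto simp: finG finP intro!: sum.cong)
  have hs: "h (\<sigma> x) = - h x" for x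
  proof -
    obtain k l m n where x: "x = (k,(l,m,n))" by (metis prod.exhaust)
    have "g n k l m = - g l m n k" unfolding g_def
      using H_sym[of \<omega>0 n k l m z] T_anti[of S n k l m] by simp
    then show ?thesis by (simp add: x h_def \<sigma>_def)
  qed
  have "sum h (Sigma G P) = sum (\<lambda>x. h (\<sigma> x)) (Sigma G P)"
    by (rule sum.reindex_bij_witness[where i=\<sigma> and j=\<sigma>])
       (auto simp: \<sigma>_def P_def nr_def algebra_simps)
  also have "\<dots> = - sum h (Sigma G P)" by (simp add: hs sum_negf)
  finally have "sum h (Sigma G P) = 0" by simp
  then have "(\<Sum>k\<in>G. I k) = 0" using sumI by simp
  then show ?thesis unfolding L R by (simp add: sum.distrib sum_distrib_left[symmetric])
qed

end
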